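(* Let $A, E \in \mathbb{R}^{m\times n}$, $b, \epsilon \in \mathbb{R}^m$, and set $\tilde A = A+E$, $\tilde b = b+\epsilon$. Assume the noiseless system $Ax=b$ is consistent and let $x_{\rm LS} = A^\dagger b$. Let $(x_k)_{k\ge0}$ be the iterates of the randomized Kaczmarz algorithm applied to the doubly-noisy system $\tilde A x\approx \tilde b$, with starting point $x_0$ satisfying $x_0 - x_{\rm LS} \in \operatorname{range}(\tilde A^\top)$. Then for every $k\ge 0$, $$\mathbb{E}\|x_k - x_{\rm LS}\|^2 \le \left(1-\frac{1}{\tilde R}\right)^k \|x_0 - x_{\rm LS}\|^2 + \frac{\|E x_{\rm LS} - \epsilon\|^2}{\sigma_{\min}^2(\tilde A)},$$ where $\tilde R = \|\tilde A^\dagger\|^2\,\|\tilde A\|_F^2$.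
   Context: Norms of vectors are Euclidean; $\|M\|$ is the spectral norm, $\|M\|_F$ the Frobenius norm, $M^\dagger$ the Moore–Penrose pseudoinverse, and $\sigma_{\min}(M)$ the smallest nonzero singular value of $M$. The randomized Kaczmarz (RK) algorithm applied to a system $\tilde A x\approx \tilde b$ (with $\tilde A$ having nonzero rows $\tilde a_1^\top,\dots,\tilde a_m^\top$) generates, from a starting point $x_0$, the iterates $x_{k+1} = x_k - \frac{\tilde a_{i(k)}^\top x_k - \tilde b_{i(k)}}{\|\tilde a_{i(k)}\|^2}\tilde a_{i(k)}$, where the indices $i(k)$ are drawn independently with $\Pr[i(k)=i] = \|\tilde a_i\|^2/\|\tilde A\|_F^2$. The expectation is over these random indices. The doubly-noisy system need not be consistent. *)

theory Defs
  imports "HOL-Analysis.Analysis"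
begin

definition pinv :: "real^'n^'m \<Rightarrow> real^'m^'n" where
  "pinv A = (THE X. A ** X ** A = A \<and> X ** A ** X = X \<and>
                    transpose (A ** X) = A ** X \<and> transpose (X ** A) = X ** A)"

definition spec_norm :: "real^'n^'m \<Rightarrow> real" where
  "spec_norm A = onorm (\<lambda>x. A *v x)"

definition frob_norm :: "real^'n^'m \<Rightarrow> real" where
  "frob_norm A = sqrt (\<Sum>i\<in>UNIV. \<Sum>j\<in>UNIV. (A $ i $ j)^2)"

definition sigma_min :: "real^'n^'m \<Rightarrow> real" where
  "sigma_min A = Min {s. s > 0 \<and> (\<exists>v. v \<noteq> 0 \<and> (transpose A ** A) *v v = (s^2) *\<^sub>R v)}"

definition rk_step :: "real^'n^'m \<Rightarrow> real^'m \<Rightarrow> real^'n \<Rightarrow> 'm \<Rightarrow> real^'n" where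
  "rk_step A b x i = x - (((A $ i) \<bullet> x - b $ i) / (norm (A $ i))^2) *\<^sub>R (A $ i)"

definition rk_iter :: "real^'n^'m \<Rightarrow> real^'m \<Rightarrow> real^'n \<Rightarrow> 'm list \<Rightarrow> real^'n" where
  "rk_iter A b x0 is = foldl (rk_step A b) x0 is"

definition rk_prob :: "real^'n^'m \<Rightarrow> 'm \<Rightarrow> real" where
  "rk_prob A i = (norm (A $ i))^2 / (frob_norm A)^2"

text \<open>Expectation of f(x_k) over i.i.d. indices i(0..k-1).\<close>
definition rk_expect :: "real^'n^'m \<Rightarrow> real^'m \<Rightarrow> real^'n \<Rightarrow> nat \<Rightarrow> (real^'n \<Rightarrow> real) \<Rightarrow> real" where
  "rk_expect A b x0 k f =
     (\<Sum>is\<in>{is::'m list. length is = k}. (\<Prod>j<k. rk_prob A (is ! j)) * f (rk_iter A b x0 is))"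

end

theory Submission
  imports Defs
begin


lemma sym_matrixI:
  fixes M :: "real^'n^'n"
  assumes "\<And>x y. (M *v x) \<bullet> y = x \<bullet> (M *v y)"
  shows "transpose M = M"
proof -
  have "\<And>x. transpose M *v x = M *v x"
  proof -
    fix x
    have "\<And>y. (transpose M *v x) \<bullet> y = (M *v x) \<bullet> y"
      using assms by (simp add: dot_lmul_matrix)
    then have "(transpose M *v x - M *v x) \<bullet> (transpose M *v x - M *v x) = 0"
      by (simp add: inner_diff_left inner_diff_right)
    then show "transpose M *v x = M *v x" by simp
  qed
  then show ?thesis by (simp add: matrix_eq)
qed

lemma sym_matrix_inner:
  fixes M :: "real^'n^'n"
  assumes "transpose M = M"
  shows "(M *v x) \<bullet> y = x \<bullet> (M *v y)"
proof -
  have "x \<bullet> (M *v y) = (x v* M) \<bullet> y" by (simp add: dot_lmul_matrix)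
  also have "x v* M = transpose M *v x" by simp
  finally show ?thesis using assms by simp
qed

lemma proj_exists:
  fixes U :: "(real^'n) set"
  assumes U: "subspace U"
  shows "\<exists>P::real^'n^'n. transpose P = P \<and> (\<forall>x. P *v x \<in> U) \<and> (\<forall>x\<in>U. P *v x = x)
            \<and> (\<forall>x. \<forall>u\<in>U. (x - P *v x) \<bullet> u = 0)"
proof -
  obtain B where BU: "B \<subseteq> U" and orth: "pairwise orthogonal B" and B1: "\<And>x. x \<in> B \<Longrightarrow> norm x = 1"
    and ind: "independent B" and spB: "span B = U"
    using orthonormal_basis_subspace[OF U] by metis
  have fin: "finite B" using ind independent_imp_finite by blast
  define p where "p = (\<lambda>x::real^'n. \<Sum>b\<in>B. (b \<bullet> x) *\<^sub>R b)"
  have lp: "linear p" unfolding p_def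
    by (intro linearI) (auto simp: inner_add_right scaleR_add_left sum.distrib scaleR_sum_right)
  define P where "P = matrix p"
  have Pp: "\<And>x. P *v x = p x" unfolding P_def using matrix_works[OF lp[unfolded linear_matrix_vector_mul_eq[symmetric]]] by simp
  have bb: "\<And>b c. b \<in> B \<Longrightarrow> c \<in> B \<Longrightarrow> b \<bullet> c = (if b = c then 1 else 0)"
    using orth B1 by (auto simp: pairwise_def orthogonal_def norm_eq_1)
  have pB: "\<And>x c. c \<in> B \<Longrightarrow> p x \<bullet> c = x \<bullet> c"
  proof -
    fix x c assume c: "c \<in> B"
    have "p x \<bullet> c = (\<Sum>b\<in>B. (b \<bullet> x) * (b \<bullet> c))" unfolding p_def by (simp add: inner_sum_left)
    also have "\<dots> = (\<Sum>b\<in>B. if b = c then c \<bullet> x else 0)"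
      by (rule sum.cong) (auto simp: bb c)
    also have "\<dots> = x \<bullet> c" using fin c by (simp add: inner_commute)
    finally show "p x \<bullet> c = x \<bullet> c" .
  qed
  have perp: "\<And>x u. u \<in> U \<Longrightarrow> (x - p x) \<bullet> u = 0"
  proof -
    fix x u assume u: "u \<in> U"
    have "orthogonal (x - p x) u"
      by (rule orthogonal_to_span[of u B]) (use u spB pB in \<open>auto simp: orthogonal_def inner_diff_left\<close>)
    then show "(x - p x) \<bullet> u = 0" by (simp add: orthogonal_def)
  qed
  have inU: "\<And>x. p x \<in> U" unfolding p_def
    using BU U by (intro subspace_sum subspace_scale) auto
  have fix_: "\<And>x. x \<in> U \<Longrightarrow> p x = x"
  proof -
    fix x assume x: "x \<in> U"
    have "x - p x \<in> U" using x inU U by (simp add: subspace_diff)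
    then have "(x - p x) \<bullet> (x - p x) = 0" using perp by blast
    then show "p x = x" by simp
  qed
  have "transpose P = P"
  proof (rule sym_matrixI)
    fix x y
    show "(P *v x) \<bullet> y = x \<bullet> (P *v y)" unfolding Pp p_def
      by (simp add: inner_sum_left inner_sum_right inner_commute mult.commute)
  qed
  then show ?thesis using Pp inU fix_ perp by metis
qed



definition penrose :: "real^'n^'m \<Rightarrow> real^'m^'n \<Rightarrow> bool" where
  "penrose A X \<longleftrightarrow> A ** X ** A = A \<and> X ** A ** X = X \<and>
                    transpose (A ** X) = A ** X \<and> transpose (X ** A) = X ** A"

lemma subspace_range_mat: "subspace (range (\<lambda>y. (M::real^'n^'m) *v y))"
  unfolding subspace_def
proof (intro conjI ballI allI)
  show "0 \<in> range (\<lambda>y. M *v y)" by (rule image_eqI[where x=0]) auto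
  fix x y assume "x \<in> range (\<lambda>y. M *v y)" "y \<in> range (\<lambda>y. M *v y)"
  then obtain u v where "x = M *v u" "y = M *v v" by auto
  then show "x + y \<in> range (\<lambda>y. M *v y)"
    by (intro image_eqI[where x="u + v"]) (auto simp: matrix_vector_right_distrib)
next
  fix c x assume "x \<in> range (\<lambda>y. M *v y)"
  then obtain u where "x = M *v u" by auto
  then show "c *\<^sub>R x \<in> range (\<lambda>y. M *v y)"
    by (intro image_eqI[where x="c *\<^sub>R u"]) (auto simp: matrix_vector_mult_scaleR)
qed

lemma penrose_unique:
  assumes "penrose A X" "penrose A Y" shows "X = Y"
proof -
  let ?T = transpose
  from assms have a1: "A ** X ** A = A" "X ** A ** X = X" "?T (A ** X) = A ** X" "?T (X ** A) = X ** A"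
    and a2: "A ** Y ** A = A" "Y ** A ** Y = Y" "?T (A ** Y) = A ** Y" "?T (Y ** A) = Y ** A"
    by (auto simp: penrose_def)
  have tA: "?T A = ?T A ** ?T Y ** ?T A"
    by (metis a2(1) matrix_transpose_mul matrix_mul_assoc)
  have tA': "?T A = ?T A ** ?T X ** ?T A"
    by (metis a1(1) matrix_transpose_mul matrix_mul_assoc)
  have "X = X ** (A ** X)" using a1(2) by (simp add: matrix_mul_assoc)
  also have "\<dots> = X ** ?T X ** ?T A" using a1(3) by (metis matrix_transpose_mul matrix_mul_assoc)
  also have "\<dots> = X ** ?T X ** (?T A ** ?T Y ** ?T A)" using tA by simp
  also have "\<dots> = X ** (?T X ** ?T A) ** (?T Y ** ?T A)" by (simp add: matrix_mul_assoc)
  also have "\<dots> = X ** (A ** X) ** (A ** Y)" using a1(3) a2(3) by (metis matrix_transpose_mul)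
  also have "\<dots> = (X ** A ** X) ** A ** Y" by (simp add: matrix_mul_assoc)
  also have "\<dots> = X ** A ** Y" using a1(2) by simp
  finally have X: "X = X ** A ** Y" .
  have "Y = (Y ** A) ** Y" using a2(2) by simp
  also have "\<dots> = ?T A ** ?T Y ** Y" using a2(4) by (metis matrix_transpose_mul)
  also have "\<dots> = (?T A ** ?T X ** ?T A) ** ?T Y ** Y" using tA' by simp
  also have "\<dots> = (?T A ** ?T X) ** (?T A ** ?T Y) ** Y" by (simp add: matrix_mul_assoc)
  also have "\<dots> = (X ** A) ** (Y ** A) ** Y" using a1(4) a2(4) by (metis matrix_transpose_mul)
  also have "\<dots> = X ** A ** (Y ** A ** Y)" by (simp add: matrix_mul_assoc)
  also have "\<dots> = X ** A ** Y" using a2(2) by simp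
  finally show ?thesis using X by simp
qed

lemma null_perp:
  fixes A :: "real^'n^'m"
  assumes "\<forall>u\<in>range (\<lambda>y. transpose A *v y). d \<bullet> u = 0"
  shows "A *v d = 0"
proof -
  have "((A *v d) v* A) \<bullet> d = (A *v d) \<bullet> (A *v d)" by (rule dot_lmul_matrix)
  then have "(A *v d) \<bullet> (A *v d) = d \<bullet> (transpose A *v (A *v d))"
    by (simp add: inner_commute)
  also have "\<dots> = 0" using assms by auto
  finally show ?thesis by simp
qed

lemma inj_rowspace:
  fixes A :: "real^'n^'m"
  assumes "d \<in> range (\<lambda>y. transpose A *v y)" "A *v d = 0" shows "d = 0"
proof -
  obtain z where z: "d = transpose A *v z" using assms by auto
  have "d \<bullet> d = z \<bullet> (A *v d)" unfolding z by (simp add: dot_lmul_matrix z[symmetric])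
  then show ?thesis using assms by simp
qed

lemma penrose_exists:
  fixes A :: "real^'n^'m"
  shows "\<exists>X. penrose A X"
proof -
  define V where "V = range (\<lambda>y. transpose A *v y)"
  define W where "W = range (\<lambda>x. A *v x)"
  have sV: "subspace V" and sW: "subspace W" unfolding V_def W_def by (rule subspace_range_mat)+
  obtain PV :: "real^'n^'n" where PV: "transpose PV = PV" "\<And>x. PV *v x \<in> V" "\<And>x. x\<in>V \<Longrightarrow> PV *v x = x"
      "\<And>x u. u\<in>V \<Longrightarrow> (x - PV *v x) \<bullet> u = 0"
    using proj_exists[OF sV] by metis
  obtain PW :: "real^'m^'m" where PW: "transpose PW = PW" "\<And>x. PW *v x \<in> W" "\<And>x. x\<in>W \<Longrightarrow> PW *v x = x"
      "\<And>x u. u\<in>W \<Longrightarrow> (x - PW *v x) \<bullet> u = 0"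
    using proj_exists[OF sW] by metis
  have APV: "\<And>x. A *v (PV *v x) = A *v x"
  proof -
    fix x
    have "A *v (x - PV *v x) = 0" using PV(4) unfolding V_def by (intro null_perp) auto
    then show "A *v (PV *v x) = A *v x" by (simp add: matrix_vector_mult_diff_distrib)
  qed
  have injV: "inj_on (\<lambda>x. A *v x) (span V)"
  proof (rule inj_onI)
    fix v w assume "v \<in> span V" "w \<in> span V" "A *v v = A *v w"
    then have "v - w \<in> V" "A *v (v - w) = 0" using sV
      by (auto simp: subspace_diff span_eq_iff[THEN iffD2, OF sV] matrix_vector_mult_diff_distrib)
    then show "v = w" using inj_rowspace unfolding V_def by force
  qed
  have lA: "linear ((*v) A)"
    using matrix_vector_mul_linear[of A] linear_matrix_vector_mul_eq by blast
  obtain g where g: "range g \<subseteq> span V" "linear g" "\<And>x. x \<in> span V \<Longrightarrow> g (A *v x) = x"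
    using linear_inj_on_left_inverse[OF lA injV] by blast
  have gV: "\<And>y. g y \<in> V" using g(1) span_eq_iff[THEN iffD2, OF sV] by auto
  define f where "f = (\<lambda>y. g (PW *v y))"
  have lf: "linear f" unfolding f_def
    using linear_compose[OF matrix_vector_mul_linear g(2)] by (simp add: o_def)
  define X where "X = matrix f"
  have Xf: "\<And>y. X *v y = f y" unfolding X_def
    using matrix_works[OF lf[unfolded linear_matrix_vector_mul_eq[symmetric]]] by simp
  have AX: "\<And>y. A *v (X *v y) = PW *v y"
  proof -
    fix y
    obtain x where x: "PW *v y = A *v x" using PW(2)[of y] unfolding W_def by auto
    have "X *v y = PV *v x" unfolding Xf f_def x using g(3) PV(2) sV APV[of x, symmetric]
      by (metis span_eq_iff)
    then show "A *v (X *v y) = PW *v y" using x APV by simp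
  qed
  have XA: "\<And>x. X *v (A *v x) = PV *v x"
  proof -
    fix x
    have "X *v (A *v x) = g (A *v x)" unfolding Xf f_def using PW(3)[of "A *v x"] unfolding W_def by auto
    also have "\<dots> = g (A *v (PV *v x))" by (simp add: APV)
    also have "\<dots> = PV *v x" using g(3) PV(2) sV by (metis span_eq_iff)
    finally show "X *v (A *v x) = PV *v x" .
  qed
  have XV: "\<And>y. X *v y \<in> V" unfolding Xf f_def using gV by simp
  have e1: "A ** X = PW" unfolding matrix_eq by (simp add: AX matrix_vector_mul_assoc[symmetric])
  have e2: "X ** A = PV" unfolding matrix_eq by (simp add: XA matrix_vector_mul_assoc[symmetric])
  have "A ** X ** A = A" unfolding matrix_eq e1
    using PW(3) unfolding W_def by (auto simp: matrix_vector_mul_assoc[symmetric])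
  moreover have "X ** A ** X = X" unfolding matrix_eq e2
    using PV(3) XV by (auto simp: matrix_vector_mul_assoc[symmetric])
  ultimately have "penrose A X" using e1 e2 PV(1) PW(1) unfolding penrose_def by simp
  then show ?thesis ..
qed

lemma pinv_penrose: "penrose A (pinv A)"
proof -
  obtain X where X: "penrose A X" using penrose_exists by blast
  have "pinv A = X" unfolding pinv_def
    by (rule the_equality) (use X penrose_unique in \<open>auto simp: penrose_def\<close>)
  then show ?thesis using X by simp
qed



lemma quad_zero:
  fixes b c :: real
  assumes "\<And>t. 0 \<le> 2 * b * t + c * t^2"
  shows "b = 0"
proof -
  define k where "k = \<bar>c\<bar> + 1"
  have k: "k > 0" unfolding k_def by simp
  have "0 \<le> 2 * b * (-b/k) + c * (-b/k)^2" by (rule assms)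
  then have "0 \<le> (2 * b * (-b/k) + c * (-b/k)^2) * k^2" using k by simp
  also have "\<dots> = b^2 * (c - 2 * k)" using k by (simp add: field_simps power2_eq_square)
  finally have "0 \<le> b^2 * (c - 2 * k)" .
  moreover have "c - 2 * k < 0" unfolding k_def by (simp add: abs_if)
  ultimately have "b^2 \<le> 0" by (simp add: mult_le_0_iff zero_le_mult_iff)
  then show ?thesis by simp
qed

lemma ata_vec: "(transpose A ** A) *v u = transpose A *v (A *v u)"
  by (rule matrix_vector_mul_assoc[symmetric])

lemma ata_inner: "((transpose A ** A) *v u) \<bullet> w = (A *v u) \<bullet> (A *v (w::real^'n))"
proof -
  have "((A *v u) v* A) \<bullet> w = (A *v u) \<bullet> (A *v w)" by (rule dot_lmul_matrix)
  then show ?thesis by (simp add: ata_vec)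
qed

lemma eig_finite:
  fixes A :: "real^'n^'m"
  shows "finite {s::real. s > 0 \<and> (\<exists>v. v \<noteq> 0 \<and> (transpose A ** A) *v v = (s^2) *\<^sub>R v)}"
    (is "finite ?S")
proof -
  define M where "M = transpose A ** A"
  define vs where "vs s = (SOME v. v \<noteq> 0 \<and> M *v v = (s^2) *\<^sub>R v)" for s
  have vs: "vs s \<noteq> 0 \<and> M *v vs s = (s^2) *\<^sub>R vs s" if "s \<in> ?S" for s
    unfolding vs_def using that unfolding M_def[symmetric]
    by (intro someI_ex[where P="\<lambda>v. v \<noteq> 0 \<and> M *v v = (s^2) *\<^sub>R v"]) blast
  have inj: "inj_on vs ?S"
  proof (rule inj_onI)
    fix s t assume st: "s \<in> ?S" "t \<in> ?S" "vs s = vs t"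
    have "(s^2) *\<^sub>R vs s = M *v vs s" using vs[OF st(1)] by simp
    also have "\<dots> = M *v vs t" using st(3) by simp
    also have "\<dots> = (t^2) *\<^sub>R vs s" using vs[OF st(2)] st(3) by simp
    finally have "(s^2 - t^2) *\<^sub>R vs s = 0" by (simp add: scaleR_diff_left)
    then have "s^2 = t^2" using vs[OF st(1)] by simp
    then show "s = t" using st by (simp add: power2_eq_iff)
  qed
  have orth: "pairwise orthogonal (vs ` ?S)"
    unfolding pairwise_def
  proof (intro ballI impI)
    fix x y assume "x \<in> vs ` ?S" "y \<in> vs ` ?S" and ne: "x \<noteq> y"
    then obtain s t where s: "s \<in> ?S" and t: "t \<in> ?S" and xy: "x = vs s" "y = vs t" by blast
    have "s \<noteq> t" using ne xy by blast
    have "s^2 * (vs s \<bullet> vs t) = (M *v vs s) \<bullet> vs t" using vs[OF s] by simp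
    also have "\<dots> = (A *v vs s) \<bullet> (A *v vs t)" unfolding M_def by (rule ata_inner)
    also have "\<dots> = (M *v vs t) \<bullet> vs s" unfolding M_def ata_inner by (rule inner_commute)
    also have "\<dots> = t^2 * (vs s \<bullet> vs t)" using vs[OF t] by (simp add: inner_commute)
    finally have "(s^2 - t^2) * (vs s \<bullet> vs t) = 0" by (simp add: algebra_simps)
    moreover have "s^2 \<noteq> t^2" using \<open>s \<noteq> t\<close> s t by (simp add: power2_eq_iff)
    ultimately show "orthogonal x y" unfolding xy by (simp add: orthogonal_def)
  qed
  have "finite (vs ` ?S)" by (rule pairwise_orthogonal_imp_finite[OF orth])
  then show ?thesis using finite_imageD inj by blast
qed

lemma sigma_bound:
  fixes A :: "real^'n^'m"
  assumes nz: "e0 \<in> range (\<lambda>y. transpose A *v y)" "e0 \<noteq> 0"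
  shows "sigma_min A > 0 \<and> (\<forall>e\<in>range (\<lambda>y. transpose A *v y). (sigma_min A)^2 * (norm e)^2 \<le> (norm (A *v e))^2)"
proof -
  define V where "V = range (\<lambda>y. transpose A *v y)"
  have sV: "subspace V" unfolding V_def by (rule subspace_range_mat)
  define K where "K = V \<inter> sphere 0 1"
  have cK: "compact K" unfolding K_def
    by (intro closed_Int_compact closed_subspace sV compact_sphere)
  have e0: "e0 \<in> V" "e0 \<noteq> 0" using nz V_def by auto
  have "(1 / norm e0) *\<^sub>R e0 \<in> K" unfolding K_def using e0 sV by (auto simp: subspace_scale)
  then have Kne: "K \<noteq> {}" by blast
  have cont: "continuous_on K (\<lambda>e. (norm (A *v e))^2)"
    by (intro continuous_intros)
  obtain u where u: "u \<in> K" "\<And>e. e \<in> K \<Longrightarrow> (norm (A *v u))^2 \<le> (norm (A *v e))^2"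
    using continuous_attains_inf[OF cK Kne cont] by blast
  define lam where "lam = (norm (A *v u))^2"
  have uV: "u \<in> V" and u1: "norm u = 1" using u(1) K_def by auto
  have homog: "lam * (norm e)^2 \<le> (norm (A *v e))^2" if e: "e \<in> V" for e
  proof (cases "e = 0")
    case True then show ?thesis by simp
  next
    case False
    have "(1 / norm e) *\<^sub>R e \<in> K" unfolding K_def using e False sV by (auto simp: subspace_scale)
    then have "lam \<le> (norm (A *v ((1 / norm e) *\<^sub>R e)))^2" using u(2) lam_def by blast
    also have "\<dots> = (norm (A *v e))^2 / (norm e)^2"
      by (simp add: matrix_vector_mult_scaleR power_divide)
    finally show ?thesis using False by (simp add: field_simps)
  qed
  have lampos: "lam > 0"
  proof -
    have "A *v u \<noteq> 0" using inj_rowspace[of u A] uV u1 V_def by auto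
    then show ?thesis unfolding lam_def by simp
  qed
  let ?M = "transpose A ** A"
  have stat: "(?M *v u - lam *\<^sub>R u) \<bullet> w = 0" if w: "w \<in> V" for w
  proof -
    define b where "b = (A *v u) \<bullet> (A *v w) - lam * (u \<bullet> w)"
    define c where "c = (norm (A *v w))^2 - lam * (norm w)^2"
    have "0 \<le> 2 * b * t + c * t^2" for t
    proof -
      have "u + t *\<^sub>R w \<in> V" using uV w sV by (simp add: subspace_add subspace_scale)
      then have h: "lam * (norm (u + t *\<^sub>R w))^2 \<le> (norm (A *v (u + t *\<^sub>R w)))^2" by (rule homog)
      have uu: "u \<bullet> u = 1" using u1 by (simp add: norm_eq_1)
      have n1: "(norm (u + t *\<^sub>R w))^2 = 1 + 2 * t * (u \<bullet> w) + t^2 * (norm w)^2"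
      proof -
        have "(norm (u + t *\<^sub>R w))^2 = (u + t *\<^sub>R w) \<bullet> (u + t *\<^sub>R w)" by (rule power2_norm_eq_inner)
        also have "\<dots> = u \<bullet> u + 2 * t * (u \<bullet> w) + t^2 * (w \<bullet> w)"
          by (simp add: inner_add_left inner_add_right inner_commute power2_eq_square algebra_simps)
        finally show ?thesis using uu by (simp add: power2_norm_eq_inner)
      qed
      have n2: "(norm (A *v (u + t *\<^sub>R w)))^2 = lam + 2 * t * ((A *v u) \<bullet> (A *v w)) + t^2 * (norm (A *v w))^2"
      proof -
        have "(norm (A *v (u + t *\<^sub>R w)))^2 = (A *v u + t *\<^sub>R (A *v w)) \<bullet> (A *v u + t *\<^sub>R (A *v w))"
          by (simp add: power2_norm_eq_inner matrix_vector_right_distrib matrix_vector_mult_scaleR)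
        also have "\<dots> = (A *v u) \<bullet> (A *v u) + 2 * t * ((A *v u) \<bullet> (A *v w)) + t^2 * ((A *v w) \<bullet> (A *v w))"
          by (simp add: inner_add_left inner_add_right inner_commute power2_eq_square algebra_simps)
        finally show ?thesis unfolding lam_def by (simp add: power2_norm_eq_inner)
      qed
      show ?thesis using h unfolding n1 n2 b_def c_def by (simp add: algebra_simps)
    qed
    then have "b = 0" by (rule quad_zero)
    then show ?thesis unfolding b_def by (simp add: inner_diff_left ata_inner)
  qed
  have dV: "?M *v u - lam *\<^sub>R u \<in> V"
    using uV sV unfolding V_def by (auto simp: ata_vec intro!: subspace_diff subspace_scale)
  have eig: "?M *v u = ((sqrt lam)^2) *\<^sub>R u"
    using stat[OF dV] lampos by simp
  let ?S = "{s::real. s > 0 \<and> (\<exists>v. v \<noteq> 0 \<and> ?M *v v = (s^2) *\<^sub>R v)}"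
  have "u \<noteq> 0" using u1 by auto
  then have inS: "sqrt lam \<in> ?S" using eig lampos by auto
  have fin: "finite ?S" by (rule eig_finite)
  have sig: "sigma_min A = Min ?S" unfolding sigma_min_def ..
  have "sigma_min A \<in> ?S" unfolding sig using inS by (intro Min_in[OF fin]) blast
  then have spos: "sigma_min A > 0" by simp
  have "sigma_min A \<le> sqrt lam" unfolding sig using fin inS by (rule Min_le)
  then have "(sigma_min A)^2 \<le> lam" using spos lampos
  proof -
    have "(sigma_min A)^2 \<le> (sqrt lam)^2" using \<open>sigma_min A \<le> sqrt lam\<close> spos by (intro power_mono) auto
    then show ?thesis using lampos by simp
  qed
  then have "(sigma_min A)^2 * (norm e)^2 \<le> (norm (A *v e))^2" if "e \<in> V" for e
  proof -
    have "(sigma_min A)^2 * (norm e)^2 \<le> lam * (norm e)^2"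
      using \<open>(sigma_min A)^2 \<le> lam\<close> by (intro mult_right_mono) auto
    then show ?thesis using homog[OF that] by linarith
  qed
  then show ?thesis using spos V_def by auto
qed



lemma expect_zero: "rk_expect A b x0 0 f = f x0"
proof -
  have "{is::'m list. length is = 0} = {[]}" by auto
  then show ?thesis unfolding rk_expect_def rk_iter_def by simp
qed

lemma expect_cons:
  "rk_expect A b x0 (Suc k) f = (\<Sum>i\<in>UNIV. rk_prob A i * rk_expect A b (rk_step A b x0 i) k f)"
proof -
  have S: "{is::'m list. length is = Suc k} = (\<lambda>(i,xs). i # xs) ` (UNIV \<times> {xs. length xs = k})"
    by (auto simp: length_Suc_conv image_iff)
  have inj: "inj_on (\<lambda>(i,xs). i # xs) (UNIV \<times> {xs::'m list. length xs = k})"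
    by (auto simp: inj_on_def)
  have "rk_expect A b x0 (Suc k) f
      = (\<Sum>(i,xs)\<in>UNIV \<times> {xs. length xs = k}. (\<Prod>j<Suc k. rk_prob A ((i#xs) ! j)) * f (rk_iter A b x0 (i#xs)))"
    unfolding rk_expect_def S by (subst sum.reindex[OF inj]) (simp add: case_prod_unfold)
  also have "\<dots> = (\<Sum>i\<in>UNIV. \<Sum>xs\<in>{xs. length xs = k}. (\<Prod>j<Suc k. rk_prob A ((i#xs) ! j)) * f (rk_iter A b x0 (i#xs)))"
    by (rule sum.cartesian_product[symmetric])
  also have "\<dots> = (\<Sum>i\<in>UNIV. rk_prob A i * rk_expect A b (rk_step A b x0 i) k f)"
    unfolding rk_expect_def rk_iter_def prod.lessThan_Suc_shift
    by (simp add: sum_distrib_left mult.assoc)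
  finally show ?thesis .
qed

lemma norm_sq_sum: "(norm (v::real^'k))^2 = (\<Sum>i\<in>UNIV. (v $ i)^2)"
  unfolding power2_norm_eq_inner inner_vec_def by (simp add: power2_eq_square)

lemma frob_sq: "(frob_norm A)^2 = (\<Sum>i\<in>UNIV. (norm (A $ i))^2)"
proof -
  have "0 \<le> (\<Sum>i\<in>UNIV. \<Sum>j\<in>UNIV. (A $ i $ j)^2)" by (intro sum_nonneg) auto
  then show ?thesis unfolding frob_norm_def by (simp add: norm_sq_sum)
qed

lemma row_in_range: "A $ i = transpose A *v axis i 1"
  by (simp add: vec_eq_iff vector_matrix_mult_def matrix_vector_mult_def axis_def transpose_def if_distrib cong: if_cong)

lemma Ae_bound: "(norm (A *v e))^2 \<le> (frob_norm A)^2 * (norm e)^2"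
proof -
  have "(norm (A *v e))^2 = (\<Sum>i\<in>UNIV. ((A $ i) \<bullet> e)^2)"
    by (simp add: norm_sq_sum matrix_vector_mul_component)
  also have "\<dots> \<le> (\<Sum>i\<in>UNIV. (norm (A $ i))^2 * (norm e)^2)"
  proof (rule sum_mono)
    fix i
    have "\<bar>(A $ i) \<bullet> e\<bar> \<le> norm (A $ i) * norm e" by (rule Cauchy_Schwarz_ineq2)
    then have "\<bar>(A $ i) \<bullet> e\<bar>^2 \<le> (norm (A $ i) * norm e)^2" by (intro power_mono) auto
    then show "((A $ i) \<bullet> e)^2 \<le> (norm (A $ i))^2 * (norm e)^2" by (simp add: power_mult_distrib)
  qed
  also have "\<dots> = (frob_norm A)^2 * (norm e)^2" by (simp add: frob_sq sum_distrib_right)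
  finally show ?thesis .
qed

lemma step_term:
  fixes A :: "real^'n^'m" and x z :: "real^'n"
  assumes a: "A $ i \<noteq> 0" and F: "(frob_norm A)^2 > 0"
  shows "rk_prob A i * (norm (rk_step A b x i - z))^2
     = ((norm (A $ i))^2 * (norm (x - z))^2 + ((b - A *v z) $ i)^2 - ((A *v (x - z)) $ i)^2) / (frob_norm A)^2"
proof -
  define a where "a = A $ i"
  define e where "e = x - z"
  define r where "r = b $ i - a \<bullet> z"
  define na where "na = a \<bullet> a"
  have na: "na > 0" using a unfolding na_def a_def by simp
  have ax: "a \<bullet> x - b $ i = a \<bullet> e - r" unfolding e_def r_def by (simp add: inner_diff_right)
  define c where "c = (a \<bullet> e - r) / na"
  have st: "rk_step A b x i - z = e - c *\<^sub>R a"
    unfolding rk_step_def c_def e_def na_def a_def[symmetric] using ax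
    by (simp add: power2_norm_eq_inner e_def)
  have N: "(norm (rk_step A b x i - z))^2 = e \<bullet> e - 2 * c * (a \<bullet> e) + c^2 * na"
    unfolding st power2_norm_eq_inner na_def
    by (simp add: inner_diff_left inner_diff_right inner_commute power2_eq_square algebra_simps)
  have P: "rk_prob A i = na / (frob_norm A)^2" unfolding rk_prob_def na_def a_def
    by (simp add: power2_norm_eq_inner)
  have R1: "((b - A *v z) $ i) = r" unfolding r_def a_def by (simp add: matrix_vector_mul_component)
  have R2: "((A *v (x - z)) $ i) = a \<bullet> e" unfolding a_def e_def by (simp add: matrix_vector_mul_component)
  have R3: "(norm (A $ i))^2 = na" "(norm (x - z))^2 = e \<bullet> e" unfolding na_def a_def e_def
    by (simp_all add: power2_norm_eq_inner)
  have nc: "na * c = a \<bullet> e - r" unfolding c_def using na by simp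
  have "na * (e \<bullet> e - 2 * c * (a \<bullet> e) + c^2 * na) = na * (e \<bullet> e) - 2 * (na * c) * (a \<bullet> e) + (na * c)^2"
    by (simp add: algebra_simps power2_eq_square)
  also have "\<dots> = na * (e \<bullet> e) + r^2 - (a \<bullet> e)^2" unfolding nc by (simp add: algebra_simps power2_eq_square)
  finally have M: "na * (e \<bullet> e - 2 * c * (a \<bullet> e) + c^2 * na) = na * (e \<bullet> e) + r^2 - (a \<bullet> e)^2" .
  show ?thesis unfolding N P R1 R2 R3 using M by simp
qed



lemma geom_le: fixes q :: real assumes "0 \<le> q" "q < 1" shows "(\<Sum>j<k. q^j) \<le> 1 / (1 - q)"
proof -
  have "(\<Sum>j<k. q^j) = (1 - q^k) / (1 - q)" using assms by (simp add: sum_gp_strict)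
  also have "\<dots> \<le> 1 / (1 - q)" using assms by (intro divide_right_mono) auto
  finally show ?thesis .
qed

theorem theorem3p1:
  fixes A E :: "real^'n^'m" and b eps :: "real^'m" and x0 :: "real^'n" and k :: nat
  defines "At \<equiv> A + E" and "bt \<equiv> b + eps" and "xLS \<equiv> pinv A *v b"
  assumes rows_nz: "\<And>i. At $ i \<noteq> 0"
    and consistent: "\<exists>x. A *v x = b"
    and start: "x0 - xLS \<in> range (\<lambda>y. transpose At *v y)"
  shows "rk_expect At bt x0 k (\<lambda>x. (norm (x - xLS))^2)
     \<le> (1 - 1 / ((spec_norm (pinv At))^2 * (frob_norm At)^2)) ^ k * (norm (x0 - xLS))^2
       + (norm (E *v xLS - eps))^2 / (sigma_min At)^2"
proof -
  define X where "X = pinv At"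
  define s where "s = spec_norm X"
  define F where "F = frob_norm At"
  define sg where "sg = sigma_min At"
  define V where "V = range (\<lambda>y. transpose At *v y)"
  define r where "r = bt - At *v xLS"
  define q where "q = 1 - 1 / (s^2 * F^2)"
  define g where "g = (\<lambda>x. (norm (x - xLS))^2)"
  have sV: "subspace V" unfolding V_def by (rule subspace_range_mat)
  obtain i0 :: 'm where True by simp
  have rowV: "\<And>i. At $ i \<in> V" unfolding V_def by (metis rangeI row_in_range)
  have row0: "At $ i0 \<noteq> 0" by (rule rows_nz)
  have F2: "F^2 = (\<Sum>i\<in>UNIV. (norm (At $ i))^2)" unfolding F_def by (rule frob_sq)
  have F2pos: "F^2 > 0"
  proof -
    have "(norm (At $ i0))^2 \<le> (\<Sum>i\<in>UNIV. (norm (At $ i))^2)" by (rule member_le_sum) auto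
    moreover have "(norm (At $ i0))^2 > 0" using row0 by simp
    ultimately show ?thesis using F2 by linarith
  qed
  have F0: "F \<ge> 0" unfolding F_def frob_norm_def by (intro real_sqrt_ge_zero sum_nonneg) auto
  have sgb: "sg > 0 \<and> (\<forall>e\<in>V. sg^2 * (norm e)^2 \<le> (norm (At *v e))^2)"
    unfolding sg_def V_def by (rule sigma_bound[OF _ row0]) (use rowV V_def in auto)
  then have sgpos: "sg > 0" and sgV: "\<And>e. e \<in> V \<Longrightarrow> sg^2 * (norm e)^2 \<le> (norm (At *v e))^2" by auto
  have pen: "penrose At X" unfolding X_def by (rule pinv_penrose)
  then have p1: "At ** X ** At = At" and p2: "X ** At ** X = X" and p3: "transpose (At ** X) = At ** X"
    and p4: "transpose (X ** At) = X ** At" by (auto simp: penrose_def)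
  have XAe: "X *v (At *v e) = e" if e: "e \<in> V" for e
  proof -
    obtain z where z: "e = transpose At *v z" using e V_def by auto
    have "X *v (At *v e) = transpose (X ** At) *v (transpose At *v z)"
      unfolding z p4 by (simp only: matrix_vector_mul_assoc matrix_mul_assoc)
    also have "\<dots> = transpose (At ** (X ** At)) *v z" by (simp only: matrix_vector_mul_assoc matrix_transpose_mul)
    also have "\<dots> = transpose At *v z" by (simp only: matrix_mul_assoc p1)
    finally show ?thesis using z by simp
  qed
  have XV: "X *v y \<in> V" for y
  proof -
    have "X *v y = (X ** At ** X) *v y" using p2 by simp
    also have "\<dots> = (transpose (X ** At) ** X) *v y" using p4 by simp
    also have "\<dots> = transpose At *v ((transpose X ** X) *v y)"
      by (simp only: matrix_transpose_mul matrix_vector_mul_assoc matrix_mul_assoc)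
    finally show ?thesis unfolding V_def by blast
  qed
  have AXy: "norm (At *v (X *v y)) \<le> norm y" for y
  proof -
    define P where "P = At ** X"
    have PP: "P ** P = P" unfolding P_def by (simp add: matrix_mul_assoc p1)
    have Pt: "transpose P = P" unfolding P_def by (rule p3)
    have "(norm (P *v y))^2 = (P *v y) \<bullet> (P *v y)" by (rule power2_norm_eq_inner)
    also have "\<dots> = y \<bullet> (P *v (P *v y))" by (rule sym_matrix_inner[OF Pt])
    also have "\<dots> = y \<bullet> (P *v y)" by (simp add: matrix_vector_mul_assoc PP)
    also have "\<dots> \<le> norm y * norm (P *v y)" by (rule norm_cauchy_schwarz)
    finally have "norm (P *v y) * norm (P *v y) \<le> norm y * norm (P *v y)" by (simp add: power2_eq_square)
    then have "norm (P *v y) \<le> norm y"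
      by (cases "norm (P *v y) = 0") (auto simp: mult_le_cancel_right)
    then show ?thesis unfolding P_def by (simp add: matrix_vector_mul_assoc)
  qed
  have bl: "bounded_linear (\<lambda>x. X *v x)" by simp
  have s_def': "s = onorm (\<lambda>x. X *v x)" unfolding s_def spec_norm_def ..
  have s0: "s \<ge> 0" unfolding s_def' by (rule onorm_pos_le[OF bl])
  have S1: "norm e \<le> s * norm (At *v e)" if "e \<in> V" for e
    using onorm[OF bl, of "At *v e"] XAe[OF that] unfolding s_def' by simp
  have AF: "norm (At *v e) \<le> F * norm e" for e
  proof -
    have "(norm (At *v e))^2 \<le> (F * norm e)^2"
      using Ae_bound[of At e] unfolding F_def by (simp only: power_mult_distrib)
    moreover have "0 \<le> F * norm e" using F0 by (intro mult_nonneg_nonneg norm_ge_zero)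
    ultimately show ?thesis by (rule power2_le_imp_le)
  qed
  have sF: "1 \<le> s * F"
  proof -
    have "norm (At $ i0) \<le> s * (F * norm (At $ i0))"
      using S1[OF rowV[of i0]] mult_left_mono[OF AF[of "At $ i0"] s0] by (rule order_trans)
    then show ?thesis using row0 by (simp add: mult.assoc[symmetric])
  qed
  have spos: "s > 0" using sF s0 by (cases "s = 0") auto
  have S3: "s \<le> 1 / sg" unfolding s_def'
  proof (rule onorm_le)
    fix y
    have "sg^2 * (norm (X *v y))^2 \<le> (norm y)^2"
      using sgV[OF XV[of y]] AXy[of y] by (meson norm_ge_zero order_trans power_mono)
    then have "(sg * norm (X *v y))^2 \<le> (norm y)^2" by (simp add: power_mult_distrib)
    then have "sg * norm (X *v y) \<le> norm y" by (rule power2_le_imp_le) simp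
    then show "norm (X *v y) \<le> 1 / sg * norm y" using sgpos by (simp add: field_simps)
  qed
  have s2: "s^2 \<le> 1 / sg^2"
  proof -
    have "s^2 \<le> (1/sg)^2" using S3 s0 by (intro power_mono) auto
    then show ?thesis by (simp add: power_divide)
  qed
  have q0: "0 \<le> q"
  proof -
    have "1 \<le> (s * F)^2" using sF by (metis one_le_power)
    then have "1 / (s^2 * F^2) \<le> 1" by (simp add: power_mult_distrib)
    then show ?thesis unfolding q_def by simp
  qed
  have q1: "q < 1" unfolding q_def using spos F2pos by simp
  have Axls: "A *v xLS = b"
  proof -
    obtain x where x: "A *v x = b" using consistent by blast
    have "A ** pinv A ** A = A" using pinv_penrose[of A] by (simp add: penrose_def)
    then have "A *v (pinv A *v (A *v x)) = A *v x" by (simp only: matrix_vector_mul_assoc matrix_mul_assoc)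
    then show ?thesis unfolding xLS_def x[symmetric] .
  qed
  have rr: "norm r = norm (E *v xLS - eps)"
  proof -
    have "r = - (E *v xLS - eps)" unfolding r_def bt_def At_def
      using Axls by (simp add: matrix_vector_mult_add_rdistrib algebra_simps)
    then show ?thesis by (simp add: norm_minus_commute)
  qed
  have psum: "(\<Sum>i\<in>UNIV. rk_prob At i) = 1"
    unfolding rk_prob_def F_def[symmetric] using F2pos by (simp add: sum_divide_distrib[symmetric] F2)
  have pnn: "rk_prob At i \<ge> 0" for i unfolding rk_prob_def by simp
  have step_sum: "(\<Sum>i\<in>UNIV. rk_prob At i * g (rk_step At bt x i))
      = (norm (x - xLS))^2 + ((norm r)^2 - (norm (At *v (x - xLS)))^2) / F^2" for x
  proof -
    have "(\<Sum>i\<in>UNIV. rk_prob At i * g (rk_step At bt x i))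
       = (\<Sum>i\<in>UNIV. ((norm (At $ i))^2 * (norm (x - xLS))^2 + (r $ i)^2 - ((At *v (x - xLS)) $ i)^2) / F^2)"
      unfolding g_def r_def F_def using rows_nz F2pos[unfolded F_def]
      by (intro sum.cong refl step_term) auto
    also have "\<dots> = ((\<Sum>i\<in>UNIV. (norm (At $ i))^2) * (norm (x - xLS))^2 + (\<Sum>i\<in>UNIV. (r $ i)^2)
                     - (\<Sum>i\<in>UNIV. ((At *v (x - xLS)) $ i)^2)) / F^2"
      by (simp add: sum_divide_distrib[symmetric] sum.distrib sum_subtractf sum_distrib_right)
    also have "\<dots> = (norm (x - xLS))^2 + ((norm r)^2 - (norm (At *v (x - xLS)))^2) / F^2"
      unfolding F2[symmetric] norm_sq_sum[symmetric] using F2pos by (simp add: field_simps)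
    finally show ?thesis .
  qed
  have contract: "(norm e)^2 - (norm (At *v e))^2 / F^2 \<le> q * (norm e)^2" if "e \<in> V" for e
  proof -
    have "(norm e)^2 \<le> s^2 * (norm (At *v e))^2"
      using S1[OF that] by (metis norm_ge_zero power_mono power_mult_distrib)
    then have "(norm e)^2 / (s^2 * F^2) \<le> (norm (At *v e))^2 / F^2"
      using spos F2pos by (simp add: field_simps)
    then show ?thesis unfolding q_def by (simp add: algebra_simps)
  qed
  have stepV: "rk_step At bt x i - xLS \<in> V" if "x - xLS \<in> V" for x i
  proof -
    have "rk_step At bt x i - xLS = (x - xLS) - (((At $ i) \<bullet> x - bt $ i) / (norm (At $ i))^2) *\<^sub>R (At $ i)"
      unfolding rk_step_def by (simp add: algebra_simps)
    then show ?thesis by (simp only:) (intro subspace_diff[OF sV] subspace_scale[OF sV] that rowV)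
  qed
  have main: "\<forall>x. x - xLS \<in> V \<longrightarrow> rk_expect At bt x k g \<le> q^k * (norm (x - xLS))^2 + (\<Sum>j<k. q^j) * ((norm r)^2 / F^2)"
  proof (induction k)
    case 0
    then show ?case by (simp add: expect_zero g_def)
  next
    case (Suc k)
    show ?case
    proof (intro allI impI)
      fix x assume xV: "x - xLS \<in> V"
      define C where "C = (\<Sum>j<k. q^j) * ((norm r)^2 / F^2)"
      have "rk_expect At bt x (Suc k) g = (\<Sum>i\<in>UNIV. rk_prob At i * rk_expect At bt (rk_step At bt x i) k g)"
        by (rule expect_cons)
      also have "\<dots> \<le> (\<Sum>i\<in>UNIV. rk_prob At i * (q^k * g (rk_step At bt x i) + C))"
        using Suc.IH stepV[OF xV] pnn unfolding C_def g_def
        by (intro sum_mono mult_left_mono) auto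
      also have "\<dots> = (\<Sum>i\<in>UNIV. q^k * (rk_prob At i * g (rk_step At bt x i)) + C * rk_prob At i)"
        by (rule sum.cong) (simp_all add: algebra_simps)
      also have "\<dots> = q^k * (\<Sum>i\<in>UNIV. rk_prob At i * g (rk_step At bt x i)) + C * (\<Sum>i\<in>UNIV. rk_prob At i)"
        by (simp only: sum.distrib sum_distrib_left)
      also have "\<dots> = q^k * (\<Sum>i\<in>UNIV. rk_prob At i * g (rk_step At bt x i)) + C"
        by (simp only: psum mult_1_right)
      also have "\<dots> = q^k * ((norm (x - xLS))^2 - (norm (At *v (x - xLS)))^2 / F^2 + (norm r)^2 / F^2) + C"
        unfolding step_sum by (simp add: diff_divide_distrib)
      also have "\<dots> \<le> q^k * (q * (norm (x - xLS))^2 + (norm r)^2 / F^2) + C"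
        using contract[OF xV] q0 by (intro add_right_mono mult_left_mono) auto
      also have "\<dots> = q^(Suc k) * (norm (x - xLS))^2 + (\<Sum>j<Suc k. q^j) * ((norm r)^2 / F^2)"
        unfolding C_def by (simp add: algebra_simps add_divide_distrib)
      finally show "rk_expect At bt x (Suc k) g \<le> q^(Suc k) * (norm (x - xLS))^2 + (\<Sum>j<Suc k. q^j) * ((norm r)^2 / F^2)" .
    qed
  qed
  have x0V: "x0 - xLS \<in> V" using start V_def by simp
  have "(\<Sum>j<k. q^j) * ((norm r)^2 / F^2) \<le> (1 / (1 - q)) * ((norm r)^2 / F^2)"
    using geom_le[OF q0 q1] F2pos by (intro mult_right_mono) auto
  also have "1 / (1 - q) = s^2 * F^2" unfolding q_def using spos F2pos by simp
  also have "s^2 * F^2 * ((norm r)^2 / F^2) = s^2 * (norm r)^2" using F2pos by simp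
  also have "\<dots> \<le> (1 / sg^2) * (norm r)^2" using s2 by (intro mult_right_mono) auto
  finally have C: "(\<Sum>j<k. q^j) * ((norm r)^2 / F^2) \<le> (norm r)^2 / sg^2" by simp
  have "rk_expect At bt x0 k g \<le> q^k * (norm (x0 - xLS))^2 + (norm r)^2 / sg^2"
    using main x0V C by fastforce
  then show ?thesis unfolding g_def q_def s_def X_def F_def sg_def rr .
qed

end
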